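(* Let $D$ be a bounded domain of $\mathbb{C}^n$ and let $f:D\to D$ be a holomorphic map having a fixed point $a\in D$. Then for every $r>0$, $f(B_k(a,r))\subset B_k(a,r)$. Moreover there exists $r>0$ such that the sequence of iterates $(f|_{B_k(a,r)})^n$ satisfies property (H): every subsequence of it converging uniformly on compact subsets of $B_k(a,r)$ has a limit $g$ with $g(B_k(a,r))\subset B_k(a,r)$.
   Context: Let $\Delta$ be the open unit disc and $\omega(z,w)=\operatorname{artanh}\left|\frac{z-w}{1-\bar w z}\right|$ the Poincaré distance. For $z,w\in D$, $\delta_D(z,w)=\inf\{\omega(\zeta,\eta)\mid \exists\,\varphi:\Delta\to D \text{ holomorphic}, \varphi(\zeta)=z,\varphi(\eta)=w\}$; the Kobayashi distance is $k_D(z,w)=\inf\sum_{i=1}^{m-1}\delta_D(z_i,z_{i+1})$ over finite chains $z_1=z,\dots,z_m=w$ in $D$. $B_k(a,r)=\{z\in D\mid k_D(a,z)<r\}$. *)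

theory Defs
  imports "HOL-Analysis.Analysis"
begin

text \<open>Holomorphic maps between open subsets of complex vector spaces C^m,
 modelled as complex ^ 'm: complex-Frechet differentiable at every point,
 i.e. real-differentiable with a complex-linear derivative.\<close>

definition cvec_holomorphic_on ::
  "(complex ^ 'm::finite \<Rightarrow> complex ^ 'n::finite) \<Rightarrow> (complex ^ 'm) set \<Rightarrow> bool" where
  "cvec_holomorphic_on f S \<longleftrightarrow>
     (\<forall>z\<in>S. \<exists>L. (f has_derivative L) (at z) \<and> (\<forall>c v. L (c *s v) = c *s L v))"

definition disc_holomorphic_on ::
  "(complex \<Rightarrow> complex ^ 'n::finite) \<Rightarrow> complex set \<Rightarrow> bool" where
  "disc_holomorphic_on \<phi> S \<longleftrightarrow>
     (\<forall>z\<in>S. \<exists>L. (\<phi> has_derivative L) (at z) \<and> (\<forall>c v. L (c * v) = c *s L v))"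

definition poincare_dist :: "complex \<Rightarrow> complex \<Rightarrow> real" where
  "poincare_dist z w = artanh (cmod ((z - w) / (1 - cnj w * z)))"

definition lempert :: "(complex ^ 'n::finite) set \<Rightarrow> complex ^ 'n \<Rightarrow> complex ^ 'n \<Rightarrow> real" where
  "lempert D z w = Inf {poincare_dist \<zeta> \<eta> | \<zeta> \<eta> \<phi>.
      \<zeta> \<in> ball 0 1 \<and> \<eta> \<in> ball 0 1 \<and> disc_holomorphic_on \<phi> (ball 0 1) \<and>
      \<phi> ` ball 0 1 \<subseteq> D \<and> \<phi> \<zeta> = z \<and> \<phi> \<eta> = w}"

definition kobayashi :: "(complex ^ 'n::finite) set \<Rightarrow> complex ^ 'n \<Rightarrow> complex ^ 'n \<Rightarrow> real" where
  "kobayashi D z w = Inf {(\<Sum>i<length zs - 1. lempert D (zs ! i) (zs ! Suc i)) | zs.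
      zs \<noteq> [] \<and> hd zs = z \<and> last zs = w \<and> set zs \<subseteq> D}"

definition kob_ball :: "(complex ^ 'n::finite) set \<Rightarrow> complex ^ 'n \<Rightarrow> real \<Rightarrow> (complex ^ 'n) set" where
  "kob_ball D a r = {z \<in> D. kobayashi D a z < r}"

definition property_H :: "(nat \<Rightarrow> 'a::metric_space \<Rightarrow> 'b::metric_space) \<Rightarrow> 'a set \<Rightarrow> 'b set \<Rightarrow> bool" where
  "property_H F B B' \<longleftrightarrow>
     (\<forall>s g. strict_mono s \<and> (\<forall>K. compact K \<and> K \<subseteq> B \<longrightarrow> uniform_limit K (\<lambda>m. F (s m)) g sequentially)
        \<longrightarrow> g ` B \<subseteq> B')"

end

theory Submission
  imports Defs "HOL-Complex_Analysis.Complex_Analysis"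
begin


lemma moeb_lt1:
  fixes z w :: complex
  assumes "norm z < 1" "norm w < 1"
  shows "cmod ((z - w) / (1 - cnj w * z)) < 1"
  using Moebius_function_norm_lt_1[OF assms(2) assms(1), of 0] by (simp add: Moebius_function_simple)

lemma artanh_ge_half:
  fixes x :: real assumes "0 \<le> x" "x < 1" shows "x / 2 \<le> artanh x"
proof -
  have a: "ln (1 - x) \<le> - x" using ln_one_minus_pos_upper_bound assms by blast
  have b: "0 \<le> ln (1 + x)" using assms by simp
  have "ln ((1 + x) / (1 - x)) = ln (1 + x) - ln (1 - x)"
    using assms by (simp add: ln_div)
  then show ?thesis using a b by (simp add: artanh_def)
qed

lemma artanh_nonneg: fixes x :: real assumes "0 \<le> x" "x < 1" shows "0 \<le> artanh x"
  using artanh_ge_half[OF assms] assms by linarith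

lemma pd_nonneg: "norm z < 1 \<Longrightarrow> norm w < 1 \<Longrightarrow> 0 \<le> poincare_dist z w"
  unfolding poincare_dist_def using moeb_lt1 artanh_nonneg by (simp add: less_imp_le) 

definition Pset :: "(complex ^ 'n::finite) set \<Rightarrow> complex ^ 'n \<Rightarrow> complex ^ 'n \<Rightarrow> real set" where
  "Pset D z w = {poincare_dist \<zeta> \<eta> | \<zeta> \<eta> \<phi>.
      \<zeta> \<in> ball 0 1 \<and> \<eta> \<in> ball 0 1 \<and> disc_holomorphic_on \<phi> (ball 0 1) \<and>
      \<phi> ` ball 0 1 \<subseteq> D \<and> \<phi> \<zeta> = z \<and> \<phi> \<eta> = w}"

lemma lempert_Pset: "lempert D z w = Inf (Pset D z w)"
  unfolding lempert_def Pset_def ..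

lemma Pset_nonneg: "x \<in> Pset D z w \<Longrightarrow> 0 \<le> x"
  unfolding Pset_def using pd_nonneg by auto

lemma Pset_bdd: "bdd_below (Pset D z w)"
  using Pset_nonneg by (meson bdd_belowI)

lemma lempert_nonneg: "Pset D z w \<noteq> {} \<Longrightarrow> 0 \<le> lempert D z w"
  unfolding lempert_Pset by (meson cInf_greatest Pset_nonneg)

lemma lempert_le: "x \<in> Pset D z w \<Longrightarrow> lempert D z w \<le> x"
  unfolding lempert_Pset by (meson cInf_lower Pset_bdd)

lemma vec_has_derivative:
  fixes g :: "'n::finite \<Rightarrow> complex \<Rightarrow> complex"
  assumes "\<And>i. (g i has_field_derivative d i) (at x)"
  shows "((\<lambda>t. \<chi> i. g i t) has_derivative (\<lambda>v. \<chi> i. v * d i)) (at x)"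
proof -
  define b :: "'n \<Rightarrow> complex \<Rightarrow> complex ^ 'n" where "b i c = (\<chi> j. if j = i then c else 0)" for i c
  have bl: "bounded_linear (b i)" for i
    unfolding b_def
    by (rule bounded_linearI'[of _]) (auto simp: vec_eq_iff)
  have eq: "(\<chi> i. h i) = (\<Sum>i\<in>UNIV. b i (h i))" for h :: "'n \<Rightarrow> complex"
    by (simp add: vec_eq_iff b_def sum_component)
  have "((\<lambda>t. \<Sum>i\<in>UNIV. b i (g i t)) has_derivative (\<lambda>v. \<Sum>i\<in>UNIV. b i (v * d i))) (at x)"
    apply (rule has_derivative_sum)
    apply (rule bounded_linear.has_derivative[OF bl])
    using assms by (simp add: has_field_derivative_def mult_commute_abs)
  then show ?thesis by (simp add: eq)
qed



lemma norm_cmult_vec: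
  fixes x :: "complex ^ 'n::finite"
  shows "norm (\<chi> i. c * x $ i) = cmod c * norm x"
  unfolding norm_vec_def by (simp add: norm_mult L2_set_right_distrib)

lemma lempert_local:
  fixes D :: "(complex ^ 'n::finite) set"
  assumes "ball w \<delta> \<subseteq> D" "norm (u - w) < \<delta>"
  shows "artanh (norm (u - w) / \<delta>) \<in> Pset D u w"
proof -
  have dpos: "0 < \<delta>" using assms(2) norm_ge_zero[of "u - w"] by linarith
  define k where "k = complex_of_real (\<delta> / norm (u - w))"
  define \<phi> where "\<phi> t = (\<chi> i. w $ i + t * (k * (u - w) $ i))" for t
  define \<zeta> where "\<zeta> = complex_of_real (norm (u - w) / \<delta>)"
  have z1: "\<zeta> \<in> ball 0 1" using assms dpos by (simp add: \<zeta>_def norm_divide)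
  have phiz: "\<phi> \<zeta> = u"
  proof (cases "u = w")
    case True then show ?thesis by (simp add: \<phi>_def vec_eq_iff)
  next
    case False
    then have "norm (u - w) \<noteq> 0" by simp
    then show ?thesis using dpos
      by (simp add: \<phi>_def vec_eq_iff \<zeta>_def k_def field_simps)
  qed
  have phi0: "\<phi> 0 = w" by (simp add: \<phi>_def vec_eq_iff)
  have hol: "disc_holomorphic_on \<phi> (ball 0 1)"
    unfolding disc_holomorphic_on_def
  proof
    fix z :: complex
    have "(\<phi> has_derivative (\<lambda>v. \<chi> i. v * (k * (u - w) $ i))) (at z)"
      unfolding \<phi>_def
      by (rule vec_has_derivative) (auto intro!: derivative_eq_intros)
    moreover have "\<forall>c v. (\<chi> i. (c * v) * (k * (u - w) $ i)) = c *s (\<chi> i. v * (k * (u - w) $ i))"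
      by (simp add: vec_eq_iff mult.assoc)
    ultimately show "\<exists>L. (\<phi> has_derivative L) (at z) \<and> (\<forall>c v. L (c * v) = c *s L v)" by blast
  qed
  have img: "\<phi> ` ball 0 1 \<subseteq> D"
  proof
    fix y assume "y \<in> \<phi> ` ball 0 1"
    then obtain t where t: "norm t < 1" "y = \<phi> t" by auto
    have "y - w = (\<chi> i. (t * k) * (u - w) $ i)" by (simp add: t \<phi>_def vec_eq_iff mult.assoc)
    then have "norm (y - w) = cmod t * cmod k * norm (u - w)" by (simp only: norm_cmult_vec norm_mult)
    also have "\<dots> < \<delta>"
    proof (cases "u = w")
      case True then show ?thesis using dpos by simp
    next
      case False
      then have "cmod k * norm (u - w) = \<delta>" using dpos by (simp add: k_def norm_divide)
      then show ?thesis using t dpos by (simp add: mult.assoc)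
    qed
    finally show "y \<in> D" using assms(1) by (simp add: dist_norm norm_minus_commute subset_iff)
  qed
  have "poincare_dist \<zeta> 0 = artanh (norm (u - w) / \<delta>)"
    using dpos by (simp add: poincare_dist_def \<zeta>_def norm_divide)
  then show ?thesis unfolding Pset_def using z1 hol img phiz phi0
    by (smt (verit) centre_in_ball mem_Collect_eq zero_less_one)
qed



lemma Pset_mono:
  fixes D :: "(complex ^ 'n::finite) set"
  assumes hf: "cvec_holomorphic_on f D" and fD: "f ` D \<subseteq> D"
  shows "Pset D z w \<subseteq> Pset D (f z) (f w)"
proof
  fix x assume "x \<in> Pset D z w"
  then obtain \<zeta> \<eta> \<phi> where x: "x = poincare_dist \<zeta> \<eta>" "\<zeta> \<in> ball 0 1" "\<eta> \<in> ball 0 1"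
    "disc_holomorphic_on \<phi> (ball 0 1)" "\<phi> ` ball 0 1 \<subseteq> D" "\<phi> \<zeta> = z" "\<phi> \<eta> = w"
    unfolding Pset_def by blast
  have "disc_holomorphic_on (f \<circ> \<phi>) (ball 0 1)"
    unfolding disc_holomorphic_on_def
  proof
    fix t :: complex assume t: "t \<in> ball 0 1"
    obtain L where L: "(\<phi> has_derivative L) (at t)" "\<forall>c v. L (c * v) = c *s L v"
      using x(4) t unfolding disc_holomorphic_on_def by blast
    have "\<phi> t \<in> D" using x(5) t by blast
    then obtain M where M: "(f has_derivative M) (at (\<phi> t))" "\<forall>c v. M (c *s v) = c *s M v"
      using hf unfolding cvec_holomorphic_on_def by blast
    have "((\<lambda>s. f (\<phi> s)) has_derivative (\<lambda>v. M (L v))) (at t)"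
      by (rule has_derivative_compose[OF L(1) M(1)])
    moreover have "\<forall>c v. M (L (c * v)) = c *s M (L v)" using L(2) M(2) by simp
    ultimately show "\<exists>L. ((f \<circ> \<phi>) has_derivative L) (at t) \<and> (\<forall>c v. L (c * v) = c *s L v)"
      unfolding o_def by blast
  qed
  moreover have "(f \<circ> \<phi>) ` ball 0 1 \<subseteq> D" using x(5) fD by (auto simp: image_subset_iff)
  ultimately show "x \<in> Pset D (f z) (f w)"
    unfolding Pset_def using x by (intro CollectI exI[of _ \<zeta>] exI[of _ \<eta>] exI[of _ "f \<circ> \<phi>"]) auto
qed

lemma lempert_mono:
  fixes D :: "(complex ^ 'n::finite) set"
  assumes "cvec_holomorphic_on f D" "f ` D \<subseteq> D" "Pset D z w \<noteq> {}"
  shows "lempert D (f z) (f w) \<le> lempert D z w"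
  unfolding lempert_Pset
  by (rule cInf_superset_mono[OF assms(3) Pset_bdd Pset_mono[OF assms(1,2)]])

lemma component_field_deriv:
  fixes \<phi> :: "complex \<Rightarrow> complex ^ 'n::finite"
  assumes "(\<phi> has_derivative L) (at t)" "\<forall>c v. L (c * v) = c *s L v"
  shows "((\<lambda>s. \<phi> s $ i) has_field_derivative (L 1 $ i)) (at t)"
proof -
  have "((\<lambda>s. \<phi> s $ i) has_derivative (\<lambda>v. L v $ i)) (at t)"
    using has_derivative_compose[OF assms(1) bounded_linear.has_derivative[OF bounded_linear_vec_nth[of i], OF has_derivative_ident]]
    by simp
  moreover have "(\<lambda>v. L v $ i) = (\<lambda>v. v * L 1 $ i)"
  proof
    fix v show "L v $ i = v * L 1 $ i" using assms(2)[rule_format, of v 1] by simp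
  qed
  ultimately show ?thesis by (simp add: has_field_derivative_def mult_commute_abs)
qed

lemma disc_component_holo:
  fixes \<phi> :: "complex \<Rightarrow> complex ^ 'n::finite"
  assumes "disc_holomorphic_on \<phi> (ball 0 1)"
  shows "(\<lambda>s. \<phi> s $ i) holomorphic_on ball 0 1"
proof -
  have "(\<lambda>s. \<phi> s $ i) field_differentiable at t" if "t \<in> ball 0 1" for t
    using assms that component_field_deriv unfolding disc_holomorphic_on_def field_differentiable_def
    by blast
  then show ?thesis
    by (simp add: holomorphic_on_def field_differentiable_at_within)
qed

lemma schwarz_pick:
  fixes h :: "complex \<Rightarrow> complex"
  assumes "h holomorphic_on ball 0 1" "\<And>t. norm t < 1 \<Longrightarrow> norm (h t) < 1"
    "norm \<eta> < 1" "h \<eta> = 0" "norm \<zeta> < 1"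
  shows "norm (h \<zeta>) \<le> cmod ((\<zeta> - \<eta>) / (1 - cnj \<eta> * \<zeta>))"
proof -
  define k where "k = h \<circ> Moebius_function 0 (-\<eta>)"
  have m1: "norm (-\<eta>) < 1" using assms by simp
  have mapsto: "Moebius_function 0 (-\<eta>) ` ball 0 1 \<subseteq> ball 0 1"
    using Moebius_function_norm_lt_1[OF m1] by auto
  have hk: "k holomorphic_on ball 0 1"
    unfolding k_def
    by (rule holomorphic_on_compose_gen[OF Moebius_function_holomorphic[OF m1] assms(1) mapsto])
  have k0: "k 0 = 0" using assms(4) by (simp add: k_def Moebius_function_of_zero)
  have kn: "norm (k t) < 1" if "norm t < 1" for t
    using assms(2) Moebius_function_norm_lt_1[OF m1 that] by (simp add: k_def)
  define \<xi> where "\<xi> = Moebius_function 0 \<eta> \<zeta>"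
  have xi: "norm \<xi> < 1" using Moebius_function_norm_lt_1[OF assms(3,5)] by (simp add: \<xi>_def)
  have "k \<xi> = h \<zeta>"
    using Moebius_function_compose[of "-\<eta>" \<eta> \<zeta>] assms(3,5) by (simp add: k_def \<xi>_def)
  then have "norm (h \<zeta>) \<le> norm \<xi>" using Schwarz_Lemma(1)[OF hk k0 kn xi] by simp
  then show ?thesis by (simp add: \<xi>_def Moebius_function_simple)
qed

lemma Pset_lower:
  fixes D :: "(complex ^ 'n::finite) set"
  assumes "D \<subseteq> cball 0 R" "x \<in> Pset D z w"
  shows "norm (z - w) \<le> 2 * real CARD('n) * (2 * R + 1) * x"
proof -
  obtain \<zeta> \<eta> \<phi> where x: "x = poincare_dist \<zeta> \<eta>" "\<zeta> \<in> ball 0 1" "\<eta> \<in> ball 0 1"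
    "disc_holomorphic_on \<phi> (ball 0 1)" "\<phi> ` ball 0 1 \<subseteq> D" "\<phi> \<zeta> = z" "\<phi> \<eta> = w"
    using assms(2) unfolding Pset_def by blast
  have R0: "0 \<le> R" using x(5) x(2) assms(1) by (meson dual_order.trans image_subset_iff mem_cball_0 norm_ge_zero)
  define K where "K = 2 * R + 1"
  have Kpos: "0 < K" using R0 by (simp add: K_def)
  define m where "m = cmod ((\<zeta> - \<eta>) / (1 - cnj \<eta> * \<zeta>))"
  have m1: "m < 1" "0 \<le> m" using moeb_lt1 x(2,3) by (auto simp: m_def)
  have comp: "norm (z $ i - w $ i) \<le> K * m" for i
  proof -
    define h where "h t = (\<phi> t $ i - \<phi> \<eta> $ i) / complex_of_real K" for t
    have cK: "cmod (complex_of_real K) = K" using Kpos by simp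
    have hh: "h holomorphic_on ball 0 1"
      unfolding h_def using disc_component_holo[OF x(4), of i]
      by (intro holomorphic_intros) auto
    have bnd: "norm (\<phi> t - \<phi> \<eta>) \<le> 2 * R" if "t \<in> ball 0 1" for t
    proof -
      have "\<phi> ` ball 0 1 \<subseteq> cball 0 R" using x(5) assms(1) by blast
      then have "\<phi> t \<in> cball 0 R" "\<phi> \<eta> \<in> cball 0 R" using x(3) that by (auto simp only: image_subset_iff)
      then have "norm (\<phi> t) \<le> R" "norm (\<phi> \<eta>) \<le> R" by auto
      then show ?thesis using norm_triangle_ineq4[of "\<phi> t" "\<phi> \<eta>"] by linarith
    qed
    have hn: "norm (h t) < 1" if "norm t < 1" for t
    proof -
      have "norm (\<phi> t $ i - \<phi> \<eta> $ i) \<le> 2 * R"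
        using bnd[of t] that Finite_Cartesian_Product.norm_nth_le[of "\<phi> t - \<phi> \<eta>" i] by auto
      then show ?thesis using Kpos unfolding h_def norm_divide cK by (simp add: K_def)
    qed
    have "norm (h \<zeta>) \<le> m"
      using schwarz_pick[OF hh hn, of \<eta> \<zeta>] x(2,3) by (simp add: h_def m_def)
    then show ?thesis using x(6,7) Kpos by (simp add: h_def norm_divide cK field_simps)
  qed
  have "norm (z - w) \<le> (\<Sum>i\<in>UNIV. norm ((z - w) $ i))" unfolding norm_vec_def by (rule L2_set_le_sum) simp
  also have "\<dots> \<le> (\<Sum>i\<in>(UNIV::'n set). K * m)" by (rule sum_mono) (use comp in simp)
  also have "\<dots> = real CARD('n) * K * m" by simp
  also have "\<dots> \<le> real CARD('n) * K * (2 * x)"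
  proof -
    have "m / 2 \<le> x" using artanh_ge_half[OF m1(2) m1(1)] by (simp add: x(1) poincare_dist_def m_def)
    then show ?thesis using Kpos by (intro mult_left_mono) auto
  qed
  finally show ?thesis by (simp add: K_def)
qed



definition KS :: "(complex ^ 'n::finite) set \<Rightarrow> complex ^ 'n \<Rightarrow> complex ^ 'n \<Rightarrow> real set" where
  "KS D z w = {(\<Sum>i<length zs - 1. lempert D (zs ! i) (zs ! Suc i)) | zs.
      zs \<noteq> [] \<and> hd zs = z \<and> last zs = w \<and> set zs \<subseteq> D}"

lemma kob_KS: "kobayashi D z w = Inf (KS D z w)"
  unfolding kobayashi_def KS_def ..

lemma chain_norm:
  fixes zs :: "'a::real_normed_vector list"
  shows "zs \<noteq> [] \<Longrightarrow> norm (hd zs - last zs) \<le> (\<Sum>i<length zs - 1. norm (zs ! i - zs ! Suc i))"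
proof (induction zs)
  case Nil then show ?case by simp
next
  case (Cons x ys)
  show ?case
  proof (cases ys)
    case Nil then show ?thesis by simp
  next
    case (Cons y ys')
    have IH: "norm (hd ys - last ys) \<le> (\<Sum>i<length ys - 1. norm (ys ! i - ys ! Suc i))"
      using Cons.IH Cons by simp
    have "length (x # ys) - 1 = Suc (length ys - 1)" using Cons by simp
    then have "(\<Sum>i<length (x # ys) - 1. norm ((x # ys) ! i - (x # ys) ! Suc i))
       = (\<Sum>i<Suc (length ys - 1). norm ((x # ys) ! i - (x # ys) ! Suc i))"
      by (simp only:)
    also have "\<dots> = norm ((x # ys) ! 0 - (x # ys) ! Suc 0) + (\<Sum>i<length ys - 1. norm ((x # ys) ! Suc i - (x # ys) ! Suc (Suc i)))"
      by (rule sum.lessThan_Suc_shift)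
    also have "\<dots> = norm (x - hd ys) + (\<Sum>i<length ys - 1. norm (ys ! i - ys ! Suc i))"
      using Cons by simp
    finally have "(\<Sum>i<length (x # ys) - 1. norm ((x # ys) ! i - (x # ys) ! Suc i))
       = norm (x - hd ys) + (\<Sum>i<length ys - 1. norm (ys ! i - ys ! Suc i))" .
    moreover have "norm (x - last ys) \<le> norm (x - hd ys) + norm (hd ys - last ys)"
      by (rule norm_diff_triangle_le[of x "hd ys"]) simp_all
    ultimately show ?thesis using IH Cons by simp
  qed
qed

lemma chain_nth_in:
  assumes "set zs \<subseteq> D" "i < length zs - 1"
  shows "zs ! i \<in> D" "zs ! Suc i \<in> D"
  using assms by auto

context
  fixes D :: "(complex ^ 'n::finite) set"
  assumes allP: "\<And>x y. x \<in> D \<Longrightarrow> y \<in> D \<Longrightarrow> Pset D x y \<noteq> {}"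
begin

lemma KS_nonneg: "x \<in> KS D z w \<Longrightarrow> 0 \<le> x"
proof -
  assume "x \<in> KS D z w"
  then obtain zs where zs: "x = (\<Sum>i<length zs - 1. lempert D (zs ! i) (zs ! Suc i))" "set zs \<subseteq> D"
    unfolding KS_def by blast
  show ?thesis unfolding zs(1)
    by (rule sum_nonneg) (use lempert_nonneg allP chain_nth_in[OF zs(2)] in blast)
qed

lemma KS_bdd: "bdd_below (KS D z w)"
  using KS_nonneg by (meson bdd_belowI)

lemma KS_ne: "z \<in> D \<Longrightarrow> w \<in> D \<Longrightarrow> KS D z w \<noteq> {}"
  unfolding KS_def by (rule ccontr) (auto dest!: spec[of _ "[z, w]"])

lemma kob_le: "x \<in> KS D z w \<Longrightarrow> kobayashi D z w \<le> x"
  unfolding kob_KS by (rule cInf_lower[OF _ KS_bdd])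

lemma kob_ge: "z \<in> D \<Longrightarrow> w \<in> D \<Longrightarrow> (\<And>x. x \<in> KS D z w \<Longrightarrow> c \<le> x) \<Longrightarrow> c \<le> kobayashi D z w"
  unfolding kob_KS by (rule cInf_greatest[OF KS_ne])

lemma kob_nonneg: "z \<in> D \<Longrightarrow> w \<in> D \<Longrightarrow> 0 \<le> kobayashi D z w"
  using kob_ge KS_nonneg by blast

lemma kob_tri:
  assumes "a \<in> D" "u \<in> D" "w \<in> D"
  shows "kobayashi D a w \<le> kobayashi D a u + lempert D u w"
proof -
  have "kobayashi D a w - lempert D u w \<le> kobayashi D a u"
  proof (rule kob_ge[OF assms(1,2)])
    fix x assume "x \<in> KS D a u"
    then obtain zs where zs: "x = (\<Sum>i<length zs - 1. lempert D (zs ! i) (zs ! Suc i))"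
      "zs \<noteq> []" "hd zs = a" "last zs = u" "set zs \<subseteq> D"
      unfolding KS_def by blast
    define ys where "ys = zs @ [w]"
    have len: "length ys - 1 = Suc (length zs - 1)" "length zs - 1 < length zs"
      using zs(2) by (auto simp: ys_def)
    have "(\<Sum>i<length ys - 1. lempert D (ys ! i) (ys ! Suc i))
        = (\<Sum>i<length zs - 1. lempert D (ys ! i) (ys ! Suc i)) + lempert D (ys ! (length zs - 1)) (ys ! Suc (length zs - 1))"
      using len(1) by simp
    also have "(\<Sum>i<length zs - 1. lempert D (ys ! i) (ys ! Suc i)) = x"
      unfolding zs(1) by (rule sum.cong) (auto simp: ys_def nth_append)
    also have "ys ! (length zs - 1) = u"
      using zs(2,4) len(2) by (simp add: ys_def nth_append last_conv_nth)
    also have "ys ! Suc (length zs - 1) = w"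
      using zs(2) by (simp add: ys_def nth_append)
    finally have "x + lempert D u w \<in> KS D a w"
      unfolding KS_def using zs assms by (intro CollectI exI[of _ ys]) (auto simp: ys_def hd_append)
    then have "kobayashi D a w \<le> x + lempert D u w" by (rule kob_le)
    then show "kobayashi D a w - lempert D u w \<le> x" by simp
  qed
  then show ?thesis by simp
qed

lemma kob_map:
  assumes hf: "cvec_holomorphic_on f D" and fD: "f ` D \<subseteq> D" and a: "a \<in> D" "f a = a" and z: "z \<in> D"
  shows "kobayashi D a (f z) \<le> kobayashi D a z"
proof (rule kob_ge[OF a(1) z])
  fix x assume "x \<in> KS D a z"
  then obtain zs where zs: "x = (\<Sum>i<length zs - 1. lempert D (zs ! i) (zs ! Suc i))"
    "zs \<noteq> []" "hd zs = a" "last zs = z" "set zs \<subseteq> D"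
    unfolding KS_def by blast
  define ys where "ys = map f zs"
  have "(\<Sum>i<length ys - 1. lempert D (ys ! i) (ys ! Suc i)) \<in> KS D a (f z)"
    unfolding KS_def using zs fD a by (intro CollectI exI[of _ ys]) (auto simp: ys_def hd_map last_map)
  then have "kobayashi D a (f z) \<le> (\<Sum>i<length ys - 1. lempert D (ys ! i) (ys ! Suc i))" by (rule kob_le)
  also have "\<dots> \<le> x"
    unfolding zs(1) ys_def length_map
  proof (rule sum_mono)
    fix i assume "i \<in> {..<length zs - 1}"
    then have i: "i < length zs - 1" by simp
    then have "Pset D (zs ! i) (zs ! Suc i) \<noteq> {}" using allP chain_nth_in[OF zs(5) i] by blast
    then show "lempert D (map f zs ! i) (map f zs ! Suc i) \<le> lempert D (zs ! i) (zs ! Suc i)"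
      using lempert_mono[OF hf fD] i by simp
  qed
  finally show "kobayashi D a (f z) \<le> x" .
qed

lemma lempert_lower:
  assumes "D \<subseteq> cball 0 R" "x \<in> D" "y \<in> D"
  shows "norm (x - y) \<le> 2 * real CARD('n) * (2 * R + 1) * lempert D x y"
proof -
  have R0: "0 \<le> R" using assms(1,2) by (meson dual_order.trans mem_cball_0 norm_ge_zero subsetD)
  define C where "C = 2 * real CARD('n) * (2 * R + 1)"
  have C0: "0 < C" using R0 by (simp add: C_def)
  have "norm (x - y) / C \<le> lempert D x y"
    unfolding lempert_Pset
  proof (rule cInf_greatest[OF allP[OF assms(2,3)]])
    fix e assume "e \<in> Pset D x y"
    then show "norm (x - y) / C \<le> e" using Pset_lower[OF assms(1)] C0 by (simp add: C_def divide_le_eq mult.commute)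
  qed
  then show ?thesis using C0 by (simp add: C_def divide_le_eq mult.commute)
qed

lemma kob_lower:
  assumes "D \<subseteq> cball 0 R" "a \<in> D" "z \<in> D"
  shows "norm (a - z) \<le> 2 * real CARD('n) * (2 * R + 1) * kobayashi D a z"
proof -
  have R0: "0 \<le> R" using assms(1,2) by (meson dual_order.trans mem_cball_0 norm_ge_zero subsetD)
  define C where "C = 2 * real CARD('n) * (2 * R + 1)"
  have C0: "0 < C" using R0 by (simp add: C_def)
  have "norm (a - z) / C \<le> kobayashi D a z"
  proof (rule kob_ge[OF assms(2,3)])
    fix x assume "x \<in> KS D a z"
    then obtain zs where zs: "x = (\<Sum>i<length zs - 1. lempert D (zs ! i) (zs ! Suc i))"
      "zs \<noteq> []" "hd zs = a" "last zs = z" "set zs \<subseteq> D"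
      unfolding KS_def by blast
    have "norm (a - z) \<le> (\<Sum>i<length zs - 1. norm (zs ! i - zs ! Suc i))"
      using chain_norm[OF zs(2)] zs by simp
    also have "\<dots> \<le> (\<Sum>i<length zs - 1. C * lempert D (zs ! i) (zs ! Suc i))"
      by (rule sum_mono) (use lempert_lower[OF assms(1)] chain_nth_in[OF zs(5)] in \<open>auto simp: C_def\<close>)
    also have "\<dots> = C * x" by (simp add: zs(1) sum_distrib_left)
    finally show "norm (a - z) / C \<le> x" using C0 by (simp add: divide_le_eq mult.commute)
  qed
  then show ?thesis using C0 by (simp add: C_def divide_le_eq mult.commute)
qed

end



lemma psi_lemma:
  fixes c :: real
  assumes c: "0 < c" "c \<le> 1/4"
  defines "\<rho> \<equiv> 1 - exp (- (3 / (4 * c)))"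
  defines "\<psi> \<equiv> (\<lambda>t::complex. 3/4 + complex_of_real c * Ln (1 + complex_of_real \<rho> * t))"
  shows "\<psi> holomorphic_on ball 0 1"
    and "\<And>t. norm t < 1 \<Longrightarrow> 0 \<le> Re (\<psi> t) \<and> Re (\<psi> t) \<le> 1 \<and> \<bar>Im (\<psi> t)\<bar> < 2 * c"
    and "\<psi> 0 = 3/4"
    and "\<exists>t. norm t < 1 \<and> \<psi> t = 1/4"
proof -
  have r0: "0 < \<rho>" "\<rho> < 1" using c by (auto simp: \<rho>_def)
  have Rew: "exp (- (3 / (4 * c))) < Re (1 + complex_of_real \<rho> * t)" if "norm t < 1" for t
  proof -
    have "\<bar>Re t\<bar> < 1" using abs_Re_le_cmod[of t] that by linarith
    then have "-1 < Re t" by linarith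
    then have "\<rho> * (-1) < \<rho> * Re t" using r0 by (intro mult_strict_left_mono) auto
    then have "\<rho> * Re t > - \<rho>" by simp
    then show ?thesis by (simp add: \<rho>_def)
  qed
  have nn: "1 + complex_of_real \<rho> * t \<notin> \<real>\<^sub>\<le>\<^sub>0" if "norm t < 1" for t
    using Rew[OF that] by (smt (verit) complex_nonpos_Reals_iff exp_gt_zero)
  show "\<psi> holomorphic_on ball 0 1"
    unfolding \<psi>_def by (intro holomorphic_intros) (use nn in auto)
  show "\<psi> 0 = 3/4" by (simp add: \<psi>_def)
  show "0 \<le> Re (\<psi> t) \<and> Re (\<psi> t) \<le> 1 \<and> \<bar>Im (\<psi> t)\<bar> < 2 * c" if t: "norm t < 1" for t
  proof -
    define w where "w = 1 + complex_of_real \<rho> * t"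
    have w0: "w \<noteq> 0" using nn[OF t] by (auto simp: w_def)
    have Rw: "exp (- (3 / (4 * c))) < Re w" using Rew[OF t] by (simp add: w_def)
    have nw1: "exp (- (3 / (4 * c))) < norm w" using Rw abs_Re_le_cmod[of w] by linarith
    have nw2: "norm w \<le> 2"
    proof -
      have "norm w \<le> 1 + norm (complex_of_real \<rho> * t)" unfolding w_def using norm_triangle_ineq[of "1::complex" "complex_of_real \<rho> * t"] by simp
      also have "\<dots> \<le> 1 + 1" using r0 t by (simp add: norm_mult mult_le_one)
      finally show ?thesis by simp
    qed
    have "ln (exp (- (3 / (4 * c)))) < ln (norm w)" using nw1 by (subst ln_less_cancel_iff) auto
    then have lnw1: "- (3 / (4 * c)) < ln (norm w)" by simp
    have lnw2: "ln (norm w) \<le> ln 2" using nw2 w0 by simp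
    have "ln (2::real) < 1" using ln_2_less_1 .
    have Re_psi: "Re (\<psi> t) = 3/4 + c * ln (norm w)" by (simp add: \<psi>_def w_def[symmetric] w0)
    have Im_psi: "Im (\<psi> t) = c * Im (Ln w)" by (simp add: \<psi>_def w_def[symmetric])
    have "\<bar>Im (Ln w)\<bar> < pi / 2" using Re_Ln_pos_lt_imp Rw by (smt (verit) exp_gt_zero)
    then have "\<bar>Im (\<psi> t)\<bar> < c * (pi / 2)" using c by (simp add: Im_psi abs_mult)
    also have "\<dots> \<le> 2 * c" using c pi_less_4 by simp
    finally have i: "\<bar>Im (\<psi> t)\<bar> < 2 * c" .
    have "c * (- (3 / (4 * c))) \<le> c * ln (norm w)" using lnw1 c by (intro mult_left_mono) auto
    then have r1: "0 \<le> Re (\<psi> t)" using c by (simp add: Re_psi field_simps)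
    have "c * ln (norm w) \<le> 1/4"
    proof -
      have "c * ln (norm w) \<le> c * 1" using c lnw2 \<open>ln 2 < 1\<close> by (intro mult_left_mono) auto
      then show ?thesis using c by linarith
    qed
    then have r2: "Re (\<psi> t) \<le> 1" by (simp add: Re_psi)
    show ?thesis using i r1 r2 by simp
  qed
  show "\<exists>t. norm t < 1 \<and> \<psi> t = 1/4"
  proof (intro exI conjI)
    define E where "E = exp (- (1 / (2 * c)))"
    have E: "0 < E" "E < 1" using c by (auto simp: E_def)
    have EM: "exp (- (3 / (4 * c))) < E" unfolding E_def using c by (simp add: field_simps)
    define t where "t = complex_of_real ((E - 1) / \<rho>)"
    have "\<bar>(E - 1) / \<rho>\<bar> < 1" using E EM r0 by (simp add: abs_div field_simps \<rho>_def)
    then show "norm t < 1" unfolding t_def norm_of_real .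
    have "1 + complex_of_real \<rho> * t = complex_of_real E" using r0 by (simp add: t_def field_simps)
    then have "Ln (1 + complex_of_real \<rho> * t) = complex_of_real (- (1 / (2 * c)))"
      using E by (simp add: Ln_of_real E_def)
    then have "complex_of_real c * Ln (1 + complex_of_real \<rho> * t) = - 1/2" using c by (simp add: field_simps)
    then show "\<psi> t = 1/4" by (simp add: \<psi>_def)
  qed
qed



lemma norm3:
  fixes a b c d e :: complex
  shows "norm (a + b * c + d * e) \<le> norm a + norm b * norm c + norm d * norm e"
proof -
  have "norm (a + b * c + d * e) \<le> norm (a + b * c) + norm (d * e)" by (rule norm_triangle_ineq)
  also have "norm (a + b * c) \<le> norm a + norm (b * c)" by (rule norm_triangle_ineq)
  finally show ?thesis by (simp add: norm_mult)
qed

lemma poly_approx: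
  fixes \<gamma> :: "real \<Rightarrow> complex ^ 'n::finite"
  assumes cont: "continuous_on {0..1} \<gamma>" and e: "0 < \<epsilon>"
  shows "\<exists>F. (\<forall>i. (\<lambda>t. F t $ i) holomorphic_on UNIV) \<and> F (1/4) = \<gamma> (1/4) \<and> F (3/4) = \<gamma> (3/4)
           \<and> (\<forall>s\<in>{0..1}. norm (F (complex_of_real s) - \<gamma> s) \<le> \<epsilon>)"
proof -
  define e1 where "e1 = \<epsilon> / (8 * real CARD('n))"
  have e1: "0 < e1" using e by (simp add: e1_def)
  have cc: "continuous_on {0..1} (\<lambda>s. \<gamma> s $ i)" for i
    by (rule continuous_on_compose2[OF bounded_linear.continuous_on[OF bounded_linear_vec_nth continuous_on_id] cont]) auto
  have "\<forall>i. \<exists>p. real_polynomial_function p \<and> (\<forall>s\<in>{0..1}. \<bar>Re (\<gamma> s $ i) - p s\<bar> < e1)"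
  proof
    fix i
    have "continuous_on {0..1} (\<lambda>s. Re (\<gamma> s $ i))" using cc cont by (intro continuous_intros) auto
    then obtain p where "real_polynomial_function p" "\<And>s. s \<in> {0..1::real} \<Longrightarrow> \<bar>Re (\<gamma> s $ i) - p s\<bar> < e1"
      using Stone_Weierstrass_real_polynomial_function[of "{0..1::real}" _ e1] e1 by auto
    then show "\<exists>p. real_polynomial_function p \<and> (\<forall>s\<in>{0..1}. \<bar>Re (\<gamma> s $ i) - p s\<bar> < e1)" by blast
  qed
  then obtain pr where pr: "\<And>i. real_polynomial_function (pr i)" "\<And>i s. s \<in> {0..1} \<Longrightarrow> \<bar>Re (\<gamma> s $ i) - pr i s\<bar> < e1"
    by metis
  have "\<forall>i. \<exists>p. real_polynomial_function p \<and> (\<forall>s\<in>{0..1}. \<bar>Im (\<gamma> s $ i) - p s\<bar> < e1)"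
  proof
    fix i
    have "continuous_on {0..1} (\<lambda>s. Im (\<gamma> s $ i))" using cc cont by (intro continuous_intros) auto
    then obtain p where "real_polynomial_function p" "\<And>s. s \<in> {0..1::real} \<Longrightarrow> \<bar>Im (\<gamma> s $ i) - p s\<bar> < e1"
      using Stone_Weierstrass_real_polynomial_function[of "{0..1::real}" _ e1] e1 by auto
    then show "\<exists>p. real_polynomial_function p \<and> (\<forall>s\<in>{0..1}. \<bar>Im (\<gamma> s $ i) - p s\<bar> < e1)" by blast
  qed
  then obtain pm where pm: "\<And>i. real_polynomial_function (pm i)" "\<And>i s. s \<in> {0..1} \<Longrightarrow> \<bar>Im (\<gamma> s $ i) - pm i s\<bar> < e1"
    by metis
  have "\<forall>i. \<exists>a n. pr i = (\<lambda>x. \<Sum>k\<le>n. a k * x ^ k)" using pr(1) real_polynomial_function_imp_sum by blast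
  then obtain ar nr where ar: "\<And>i. pr i = (\<lambda>x. \<Sum>k\<le>nr i. ar i k * x ^ k)" by metis
  have "\<forall>i. \<exists>a n. pm i = (\<lambda>x. \<Sum>k\<le>n. a k * x ^ k)" using pm(1) real_polynomial_function_imp_sum by blast
  then obtain am nm where am: "\<And>i. pm i = (\<lambda>x. \<Sum>k\<le>nm i. am i k * x ^ k)" by metis
  define P where "P i t = (\<Sum>k\<le>nr i. complex_of_real (ar i k) * t ^ k) + \<i> * (\<Sum>k\<le>nm i. complex_of_real (am i k) * t ^ k)" for i t
  have Preal: "P i (complex_of_real s) = complex_of_real (pr i s) + \<i> * complex_of_real (pm i s)" for i s
    by (simp add: P_def ar am)
  have Perr: "norm (P i (complex_of_real s) - \<gamma> s $ i) \<le> 2 * e1" if s: "s \<in> {0..1}" for i s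
  proof -
    have "norm (P i (complex_of_real s) - \<gamma> s $ i) \<le> \<bar>Re (P i (complex_of_real s) - \<gamma> s $ i)\<bar> + \<bar>Im (P i (complex_of_real s) - \<gamma> s $ i)\<bar>"
      by (rule cmod_le)
    also have "\<dots> = \<bar>Re (\<gamma> s $ i) - pr i s\<bar> + \<bar>Im (\<gamma> s $ i) - pm i s\<bar>" by (simp add: Preal abs_minus_commute)
    also have "\<dots> \<le> 2 * e1" using pr(2)[OF s, of i] pm(2)[OF s, of i] by simp
    finally show ?thesis .
  qed
  define Q where "Q i t = P i t + (\<gamma> (1/4) $ i - P i (1/4)) * ((3 - 4 * t) / 2) + (\<gamma> (3/4) $ i - P i (3/4)) * ((4 * t - 1) / 2)" for i t
  define F where "F t = (\<chi> i. Q i t)" for t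
  have hol: "(\<lambda>t. F t $ i) holomorphic_on UNIV" for i
    unfolding F_def vec_lambda_beta Q_def P_def by (intro holomorphic_intros) auto
  have F1: "F (1/4) = \<gamma> (1/4)" by (simp add: F_def Q_def vec_eq_iff)
  have F3: "F (3/4) = \<gamma> (3/4)" by (simp add: F_def Q_def vec_eq_iff)
  have e14: "norm (\<gamma> (1/4) $ i - P i (1/4)) \<le> 2 * e1" for i
    using Perr[of "1/4" i] by (simp add: norm_minus_commute)
  have e34: "norm (\<gamma> (3/4) $ i - P i (3/4)) \<le> 2 * e1" for i
    using Perr[of "3/4" i] by (simp add: norm_minus_commute)
  have Ferr: "norm (F (complex_of_real s) - \<gamma> s) \<le> \<epsilon>" if s: "s \<in> {0..1}" for s
  proof -
    have nA: "norm ((3 - 4 * complex_of_real s) / 2) \<le> 3/2"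
    proof -
      have "(3 - 4 * complex_of_real s) / 2 = complex_of_real ((3 - 4 * s) / 2)" by simp
      then show ?thesis using s by (simp only: norm_of_real) auto
    qed
    have nB: "norm ((4 * complex_of_real s - 1) / 2) \<le> 3/2"
    proof -
      have "(4 * complex_of_real s - 1) / 2 = complex_of_real ((4 * s - 1) / 2)" by simp
      then show ?thesis using s by (simp only: norm_of_real) auto
    qed
    have comp: "norm (Q i (complex_of_real s) - \<gamma> s $ i) \<le> 8 * e1" for i
    proof -
      define a where "a = P i (complex_of_real s) - \<gamma> s $ i"
      define b where "b = \<gamma> (1/4) $ i - P i (1/4)"
      define c where "c = (3 - 4 * complex_of_real s) / 2"
      define d where "d = \<gamma> (3/4) $ i - P i (3/4)"
      define g where "g = (4 * complex_of_real s - 1) / 2"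
      have eq: "Q i (complex_of_real s) - \<gamma> s $ i = a + b * c + d * g"
        by (simp add: Q_def a_def b_def c_def d_def g_def)
      have "norm a + norm b * norm c + norm d * norm g \<le> 2 * e1 + (2 * e1) * (3/2) + (2 * e1) * (3/2)"
        using Perr[OF s, of i] e14[of i] e34[of i] nA nB e1 unfolding a_def b_def c_def d_def g_def
        by (intro add_mono mult_mono) auto
      then have "norm (a + b * c + d * g) \<le> 8 * e1" using norm3[of a b c d g] by simp
      then show ?thesis by (simp only: eq)
    qed
    have "norm (F (complex_of_real s) - \<gamma> s) \<le> (\<Sum>i\<in>UNIV. norm ((F (complex_of_real s) - \<gamma> s) $ i))"
      unfolding norm_vec_def by (rule L2_set_le_sum) simp
    also have "\<dots> \<le> (\<Sum>i\<in>(UNIV::'n set). 8 * e1)"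
      by (rule sum_mono) (simp add: F_def comp)
    also have "\<dots> = \<epsilon>" by (simp add: e1_def)
    finally show ?thesis .
  qed
  show ?thesis using hol F1 F3 Ferr by blast
qed



lemma disc_connect:
  fixes D :: "(complex ^ 'n::finite) set"
  assumes "open D" "connected D" "x \<in> D" "y \<in> D"
  shows "Pset D x y \<noteq> {}"
proof -
  obtain \<gamma> where g: "path \<gamma>" "path_image \<gamma> \<subseteq> D" "pathstart \<gamma> = x" "pathfinish \<gamma> = y"
    using connected_open_path_connected[OF assms(1,2)] assms(3,4) unfolding path_connected_def by blast
  obtain e where e: "e > 0" "(\<Union>z\<in>path_image \<gamma>. ball z e) \<subseteq> D"
    using compact_subset_open_imp_ball_epsilon_subset[OF compact_path_image[OF g(1)] assms(1) g(2)] by blast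
  define \<gamma>' where "\<gamma>' s = \<gamma> (max 0 (min 1 (2 * s - 1/2)))" for s :: real
  have cl: "continuous_on {0..1} (\<lambda>s::real. max 0 (min 1 (2 * s - 1/2)))"
    by (intro continuous_intros)
  have clim: "(\<lambda>s::real. max 0 (min 1 (2 * s - 1/2))) ` {0..1} \<subseteq> {0..1}" by auto
  have cg: "continuous_on {0..1} \<gamma>'"
    unfolding \<gamma>'_def
    by (rule continuous_on_compose2[OF g(1)[unfolded path_def] cl clim])
  have gin: "\<gamma>' s \<in> path_image \<gamma>" for s
    unfolding \<gamma>'_def path_image_def by auto
  have g14: "\<gamma>' (1/4) = x" using g(3) by (simp add: \<gamma>'_def pathstart_def)
  have g34: "\<gamma>' (3/4) = y" using g(4) by (simp add: \<gamma>'_def pathfinish_def)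
  have e4: "0 < e / 4" using e by simp
  obtain F :: "complex \<Rightarrow> complex ^ 'n" where F: "\<And>i. (\<lambda>t. F t $ i) holomorphic_on UNIV" "F (1/4) = \<gamma>' (1/4)" "F (3/4) = \<gamma>' (3/4)"
    "\<And>s. s \<in> {0..1} \<Longrightarrow> norm (F (complex_of_real s) - \<gamma>' s) \<le> e / 4"
    using poly_approx[OF cg e4] by blast
  define K where "K = {t::complex. 0 \<le> Re t \<and> Re t \<le> 1 \<and> \<bar>Im t\<bar> \<le> 1}"
  have "closed K" unfolding K_def
    by (intro closed_Collect_conj closed_Collect_le continuous_intros)
  moreover have "bounded K"
  proof -
    have "K \<subseteq> cball 0 2"
    proof
      fix t assume "t \<in> K"
      then have "cmod t \<le> 2" using cmod_le[of t] unfolding K_def by auto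
      then show "t \<in> cball 0 2" by simp
    qed
    then show ?thesis using bounded_cball bounded_subset by blast
  qed
  ultimately have cK: "compact K" using compact_eq_bounded_closed by blast
  have contF: "continuous_on UNIV F"
  proof -
    have "continuous_on UNIV (\<lambda>t. \<chi> i. F t $ i)"
      by (intro continuous_on_vec_lambda holomorphic_on_imp_continuous_on F(1))
    then show ?thesis by simp
  qed
  have "uniformly_continuous_on K F"
    by (rule compact_uniformly_continuous[OF continuous_on_subset[OF contF] cK]) simp
  then obtain h where h: "h > 0" "\<And>t t'. t \<in> K \<Longrightarrow> t' \<in> K \<Longrightarrow> dist t' t < h \<Longrightarrow> dist (F t') (F t) < e / 4"
    unfolding uniformly_continuous_on_def using e4 by metis
  define c where "c = min (1/4) (h/2)"
  have c: "0 < c" "c \<le> 1/4" "2 * c \<le> h" using h by (auto simp: c_def)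
  define \<rho> where "\<rho> = 1 - exp (- (3 / (4 * c)))"
  define \<psi> where "\<psi> = (\<lambda>t::complex. 3/4 + complex_of_real c * Ln (1 + complex_of_real \<rho> * t))"
  have P1: "\<psi> holomorphic_on ball 0 1" unfolding \<psi>_def \<rho>_def by (rule psi_lemma(1)[OF c(1,2)])
  have P2: "\<And>t. norm t < 1 \<Longrightarrow> 0 \<le> Re (\<psi> t) \<and> Re (\<psi> t) \<le> 1 \<and> \<bar>Im (\<psi> t)\<bar> < 2 * c"
    unfolding \<psi>_def \<rho>_def by (rule psi_lemma(2)[OF c(1,2)])
  have P3: "\<psi> 0 = 3/4" unfolding \<psi>_def \<rho>_def by (rule psi_lemma(3)[OF c(1,2)])
  have "\<exists>t. norm t < 1 \<and> \<psi> t = 1/4" unfolding \<psi>_def \<rho>_def by (rule psi_lemma(4)[OF c(1,2)])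
  then obtain t1 where t1: "norm t1 < 1" "\<psi> t1 = 1/4" by blast
  define \<phi> where "\<phi> t = F (\<psi> t)" for t
  have img: "\<phi> ` ball 0 1 \<subseteq> D"
  proof
    fix z assume "z \<in> \<phi> ` ball 0 1"
    then obtain \<zeta> where \<zeta>: "norm \<zeta> < 1" "z = F (\<psi> \<zeta>)" by (auto simp: \<phi>_def)
    define t where "t = \<psi> \<zeta>"
    define s where "s = Re t"
    have tb: "0 \<le> Re t" "Re t \<le> 1" "\<bar>Im t\<bar> < 2 * c" using P2[OF \<zeta>(1)] by (auto simp: t_def)
    have tK: "t \<in> K" using tb c unfolding K_def by auto
    have sK: "complex_of_real s \<in> K" using tb unfolding K_def s_def by auto
    have "dist t (complex_of_real s) = \<bar>Im t\<bar>" by (simp add: dist_norm cmod_def s_def)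
    then have "dist t (complex_of_real s) < h" using tb c by linarith
    then have d1: "dist (F t) (F (complex_of_real s)) < e / 4" using h(2)[OF sK tK] by simp
    have d2: "norm (F (complex_of_real s) - \<gamma>' s) \<le> e / 4" using F(4) tb by (simp add: s_def)
    have "dist (F t) (\<gamma>' s) < e"
      using d1 d2 dist_triangle[of "F t" "\<gamma>' s" "F (complex_of_real s)"] e by (simp add: dist_norm)
    then have "F t \<in> ball (\<gamma>' s) e" by (simp add: dist_commute)
    then have "F t \<in> (\<Union>z\<in>path_image \<gamma>. ball z e)" using gin[of s] by blast
    then have "F t \<in> D" using e(2) by blast
    then show "z \<in> D" using \<zeta>(2) by (simp add: t_def)
  qed
  have hol: "disc_holomorphic_on \<phi> (ball 0 1)"
    unfolding disc_holomorphic_on_def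
  proof
    fix z :: complex assume z: "z \<in> ball 0 1"
    have hc: "(\<lambda>t. F (\<psi> t) $ i) holomorphic_on ball 0 1" for i
    proof -
      have "((\<lambda>t. F t $ i) \<circ> \<psi>) holomorphic_on ball 0 1"
        by (rule holomorphic_on_compose[OF P1 holomorphic_on_subset[OF F(1)]]) simp
      then show ?thesis by (simp add: o_def)
    qed
    have "((\<lambda>t. \<chi> i. F (\<psi> t) $ i) has_derivative (\<lambda>v. \<chi> i. v * deriv (\<lambda>t. F (\<psi> t) $ i) z)) (at z)"
      by (rule vec_has_derivative) (rule holomorphic_derivI[OF hc open_ball z])
    then have "(\<phi> has_derivative (\<lambda>v. \<chi> i. v * deriv (\<lambda>t. F (\<psi> t) $ i) z)) (at z)"
      by (simp add: \<phi>_def[abs_def])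
    moreover have "\<forall>c v. (\<chi> i. (c * v) * deriv (\<lambda>t. F (\<psi> t) $ i) z) = c *s (\<chi> i. v * deriv (\<lambda>t. F (\<psi> t) $ i) z)"
      by (simp add: vec_eq_iff mult.assoc)
    ultimately show "\<exists>L. (\<phi> has_derivative L) (at z) \<and> (\<forall>c v. L (c * v) = c *s L v)" by blast
  qed
  have p1: "\<phi> t1 = x" unfolding \<phi>_def t1(2) using F(2) g14 by simp
  have p0: "\<phi> 0 = y" unfolding \<phi>_def P3 using F(3) g34 by simp
  have "poincare_dist t1 0 \<in> Pset D x y"
    unfolding Pset_def using t1(1) hol img p1 p0
    by (intro CollectI exI[of _ t1] exI[of _ "0::complex"] exI[of _ \<phi>]) auto
  then show ?thesis by blast
qed

theorem proposition11p3:
  fixes D :: "(complex ^ 'n::finite) set" and f :: "complex ^ 'n \<Rightarrow> complex ^ 'n"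
    and a :: "complex ^ 'n"
  assumes "open D" and "connected D" and "bounded D"
    and "cvec_holomorphic_on f D" and "f ` D \<subseteq> D"
    and "a \<in> D" and "f a = a"
  shows "(\<forall>r>0. f ` kob_ball D a r \<subseteq> kob_ball D a r) \<and>
         (\<exists>r>0. property_H (\<lambda>m. f ^^ m) (kob_ball D a r) (kob_ball D a r))"
proof -
  note allP = disc_connect[OF assms(1,2)]
  have iter: "(f ^^ m) z \<in> D \<and> kobayashi D a ((f ^^ m) z) \<le> kobayashi D a z" if "z \<in> D" for z m
  proof (induction m)
    case 0 then show ?case using that by simp
  next
    case (Suc m)
    have "(f ^^ Suc m) z \<in> D" using Suc assms(5) by auto
    moreover have "kobayashi D a ((f ^^ Suc m) z) \<le> kobayashi D a ((f ^^ m) z)"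
      using kob_map[OF allP assms(4,5,6,7)] Suc by simp
    ultimately show ?case using Suc by linarith
  qed
  have part1: "\<forall>r>0. f ` kob_ball D a r \<subseteq> kob_ball D a r"
  proof (intro allI impI subsetI)
    fix r :: real and y assume "y \<in> f ` kob_ball D a r"
    then obtain z where z: "z \<in> D" "kobayashi D a z < r" "y = f z" unfolding kob_ball_def by auto
    show "y \<in> kob_ball D a r"
    proof -
      have "f z \<in> D" using z assms(5) by auto
      moreover have "kobayashi D a (f z) \<le> kobayashi D a z"
        using kob_map[OF allP assms(4,5,6,7) z(1)] .
      ultimately show ?thesis using z unfolding kob_ball_def by simp
    qed
  qed
  obtain R where "\<forall>x\<in>D. norm x \<le> R" using assms(3) unfolding bounded_pos by blast
  then have R: "D \<subseteq> cball 0 R" by auto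
  obtain \<epsilon> where e: "\<epsilon> > 0" "ball a \<epsilon> \<subseteq> D"
    using assms(1,6) unfolding open_contains_ball by blast
  define \<delta> where "\<delta> = \<epsilon> / 2"
  have d: "\<delta> > 0" "ball a (2 * \<delta>) \<subseteq> D" using e by (auto simp: \<delta>_def)
  have R0: "0 \<le> R" using R assms(6) by (meson dual_order.trans mem_cball_0 norm_ge_zero subsetD)
  define C where "C = 2 * real CARD('n) * (2 * R + 1)"
  have C0: "0 < C" using R0 by (simp add: C_def)
  define r where "r = \<delta> / C"
  have r0: "r > 0" using d C0 by (simp add: r_def)
  have "property_H (\<lambda>m. f ^^ m) (kob_ball D a r) (kob_ball D a r)"
    unfolding property_H_def
  proof (intro allI impI subsetI)
    fix s :: "nat \<Rightarrow> nat" and g y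
    assume H: "strict_mono s \<and> (\<forall>K. compact K \<and> K \<subseteq> kob_ball D a r \<longrightarrow> uniform_limit K (\<lambda>m. (f ^^ s m)) g sequentially)"
      and y: "y \<in> g ` kob_ball D a r"
    then obtain z where z: "z \<in> D" "kobayashi D a z < r" "y = g z" unfolding kob_ball_def by auto
    define \<rho> where "\<rho> = kobayashi D a z"
    define u where "u m = (f ^^ s m) z" for m
    have "uniform_limit {z} (\<lambda>m. (f ^^ s m)) g sequentially"
    proof -
      have "compact {z} \<and> {z} \<subseteq> kob_ball D a r" using z by (simp add: kob_ball_def)
      then show ?thesis using H by blast
    qed
    then have lim: "u \<longlonglongrightarrow> g z" unfolding u_def by (rule tendsto_uniform_limitI) simp
    have uD: "u m \<in> D" and uk: "kobayashi D a (u m) \<le> \<rho>" for m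
      using iter[OF z(1), of "s m"] by (auto simp: u_def \<rho>_def)
    have un: "norm (a - u m) \<le> C * \<rho>" for m
    proof -
      have "norm (a - u m) \<le> C * kobayashi D a (u m)"
        using kob_lower[OF allP R assms(6) uD[of m]] unfolding C_def by simp
      also have "\<dots> \<le> C * \<rho>" using uk[of m] C0 by (intro mult_left_mono) auto
      finally show ?thesis .
    qed
    have "norm (a - g z) \<le> C * \<rho>"
    proof (rule tendsto_upperbound)
      show "(\<lambda>m. norm (a - u m)) \<longlonglongrightarrow> norm (a - g z)" by (intro tendsto_intros lim)
    qed (use un in auto)
    have "C * \<rho> < \<delta>" using z(2) C0 unfolding \<rho>_def r_def by (simp add: field_simps)
    then have gz: "norm (a - g z) < \<delta>" using \<open>norm (a - g z) \<le> C * \<rho>\<close> by linarith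
    have bD: "ball (g z) \<delta> \<subseteq> D"
    proof
      fix x assume "x \<in> ball (g z) \<delta>"
      then have "norm (g z - x) < \<delta>" by (simp add: dist_norm)
      then have "norm (a - x) < 2 * \<delta>" using gz norm_triangle_lt[of "a - g z" "g z - x"] by simp
      then have "x \<in> ball a (2 * \<delta>)" by (simp add: dist_norm)
      then show "x \<in> D" using d(2) by blast
    qed
    have gD: "g z \<in> D" using bD d(1) by auto
    have ev: "eventually (\<lambda>m. norm (u m - g z) < \<delta>) sequentially"
      using lim d(1) unfolding tendsto_iff by (simp add: dist_norm)
    have ev2: "eventually (\<lambda>m. kobayashi D a (g z) \<le> \<rho> + artanh (norm (u m - g z) / \<delta>)) sequentially"
    proof (rule eventually_mono[OF ev])
      fix m assume m: "norm (u m - g z) < \<delta>"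
      have "kobayashi D a (g z) \<le> kobayashi D a (u m) + lempert D (u m) (g z)"
        using kob_tri[OF allP assms(6) uD[of m] gD] .
      also have "lempert D (u m) (g z) \<le> artanh (norm (u m - g z) / \<delta>)"
        by (rule lempert_le[OF lempert_local[OF bD m]])
      finally show "kobayashi D a (g z) \<le> \<rho> + artanh (norm (u m - g z) / \<delta>)" using uk[of m] by linarith
    qed
    have tl: "(\<lambda>m. \<rho> + artanh (norm (u m - g z) / \<delta>)) \<longlonglongrightarrow> \<rho> + artanh (norm (g z - g z) / \<delta>)"
      by (intro tendsto_intros tendsto_artanh lim) (use d(1) in auto)
    have "kobayashi D a (g z) \<le> \<rho>"
      using tendsto_lowerbound[OF tl ev2] by simp
    then show "y \<in> kob_ball D a r" using z gD \<open>kobayashi D a z < r\<close> unfolding kob_ball_def \<rho>_def by auto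
  qed
  then show ?thesis using part1 r0 by blast
qed

end
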